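(* Let $(\mathsf{X},\mu)$, $(\mathsf{Y},\nu)$ be Polish probability spaces and $c:\mathsf{X}\times\mathsf{Y}\to[0,\infty)$ measurable, and for each $\varepsilon>0$ let $\pi_\varepsilon$ be the $(c,\varepsilon)$-cyclically invariant coupling (assumed to exist for every $\varepsilon>0$). Let $k\ge2$ and $0\le\delta\le\delta'\le\infty$. Define $$A_k(\delta,\delta'):=\Big\{(x_i,y_i)_{i=1}^k\in(\mathsf{X}\times\mathsf{Y})^k:\ \delta\le\sum_{i=1}^k c(x_i,y_i)-\sum_{i=1}^k c(x_i,y_{i+1})\le\delta'\Big\},$$ with $y_{k+1}:=y_1$, and let $A\subset A_k(\delta,\delta')$ be Borel. Then $\pi_\varepsilon^k:=\prod_{i=1}^k\pi_\varepsilon(dx_i,dy_i)$ (the $k$-fold product measure on $(\mathsf{X}\times\mathsf{Y})^k$) satisfies $$\pi_\varepsilon^k(A)\le e^{-\delta/\varepsilon}\quad\text{for all }\varepsilon>0.$$ Suppose in addition that $\bar A:=\{(x_i,y_{i+1})_{i=1}^k:\ (x_i,y_i)_{i=1}^k\in A\}$ satisfies $\liminf_{\varepsilon\to0}\varepsilon\log\pi_\varepsilon^k(\bar A)=0$. Then $$\liminf_{\varepsilon\to0}\varepsilon\log\pi_\varepsilon^k(A)\ge-\delta'.$$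
   Context: $\Pi(\mu,\nu)$ is the set of couplings of $\mu,\nu$ and $P:=\mu\otimes\nu$. A coupling $\pi\in\Pi(\mu,\nu)$ is $(c,\varepsilon)$-cyclically invariant if $\pi\sim P$ and its density admits a version $\frac{d\pi}{dP}:\mathsf{X}\times\mathsf{Y}\to(0,\infty)$ such that $\prod_{i=1}^k\frac{d\pi}{dP}(x_i,y_i)=\exp\big(-\frac1\varepsilon[\sum_{i=1}^k c(x_i,y_i)-\sum_{i=1}^k c(x_i,y_{i+1})]\big)\prod_{i=1}^k\frac{d\pi}{dP}(x_i,y_{i+1})$ for all $k\in\mathbb{N}$ and $(x_i,y_i)_{i=1}^k\subset\mathsf{X}\times\mathsf{Y}$, with $y_{k+1}:=y_1$. There is at most one such coupling for each $\varepsilon$. *)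

theory Defs
  imports "HOL-Probability.Probability"
begin

definition elog :: "real \<Rightarrow> ereal" where
  "elog p = (if p > 0 then ereal (ln p) else -\<infinity>)"

definition coupling :: "'a measure \<Rightarrow> 'b measure \<Rightarrow> ('a \<times> 'b) measure \<Rightarrow> bool" where
  "coupling \<mu> \<nu> \<pi> \<longleftrightarrow> sets \<pi> = sets (\<mu> \<Otimes>\<^sub>M \<nu>)
     \<and> distr \<pi> \<mu> fst = \<mu> \<and> distr \<pi> \<nu> snd = \<nu>"

definition cyc_inv_coupling ::
  "'a measure \<Rightarrow> 'b measure \<Rightarrow> ('a \<times> 'b \<Rightarrow> real) \<Rightarrow> real \<Rightarrow> ('a \<times> 'b) measure \<Rightarrow> bool" where
  "cyc_inv_coupling \<mu> \<nu> c \<epsilon> \<pi> \<longleftrightarrow> coupling \<mu> \<nu> \<pi>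
     \<and> absolutely_continuous (\<mu> \<Otimes>\<^sub>M \<nu>) \<pi> \<and> absolutely_continuous \<pi> (\<mu> \<Otimes>\<^sub>M \<nu>)
     \<and> (\<exists>f. f \<in> borel_measurable (\<mu> \<Otimes>\<^sub>M \<nu>) \<and> (\<forall>z. f z > 0)
          \<and> \<pi> = density (\<mu> \<Otimes>\<^sub>M \<nu>) (\<lambda>z. ennreal (f z))
          \<and> (\<forall>k::nat. k \<ge> 1 \<longrightarrow> (\<forall>(x::nat \<Rightarrow> 'a) (y::nat \<Rightarrow> 'b).
               (\<Prod>i<k. f (x i, y i)) =
               exp (- (1/\<epsilon>) * ((\<Sum>i<k. c (x i, y i)) - (\<Sum>i<k. c (x i, y (Suc i mod k)))))
               * (\<Prod>i<k. f (x i, y (Suc i mod k))))))"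

text \<open>The set A_k(delta,delta') of k-tuples, indices 0..k-1, y_k := y_0.\<close>
definition A_set :: "('a \<times> 'b \<Rightarrow> real) \<Rightarrow> nat \<Rightarrow> ereal \<Rightarrow> ereal \<Rightarrow> (nat \<Rightarrow> 'a \<times> 'b) set" where
  "A_set c k \<delta> \<delta>' = {z. \<delta> \<le> ereal ((\<Sum>i<k. c (z i)) - (\<Sum>i<k. c (fst (z i), snd (z (Suc i mod k)))))
      \<and> ereal ((\<Sum>i<k. c (z i)) - (\<Sum>i<k. c (fst (z i), snd (z (Suc i mod k))))) \<le> \<delta>'}"

definition shift_y :: "nat \<Rightarrow> (nat \<Rightarrow> 'a \<times> 'b) \<Rightarrow> (nat \<Rightarrow> 'a \<times> 'b)" where
  "shift_y k z = (\<lambda>i\<in>{..<k}. (fst (z i), snd (z (Suc i mod k))))"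

definition exp_neg_div :: "ereal \<Rightarrow> real \<Rightarrow> real" where
  "exp_neg_div \<delta> \<epsilon> = (if \<delta> = \<infinity> then 0 else exp (- real_of_ereal \<delta> / \<epsilon>))"

end

theory Submission
  imports Defs
begin


lemma prod_indicator_PiE:
  assumes "z \<in> extensional I" "finite I"
  shows "(\<Prod>i\<in>I. indicator (A i) (z i) :: ennreal) = indicator (Pi\<^sub>E I A) z"
  using assms by (auto simp: indicator_def PiE_def Pi_def prod_zero_iff)

lemma PiM_density:
  fixes M :: "'a measure" and g :: "'a \<Rightarrow> ennreal"
  assumes I: "finite I" and sf: "sigma_finite_measure M"
    and sfd: "sigma_finite_measure (density M g)" and g: "g \<in> borel_measurable M"
  shows "PiM I (\<lambda>_. density M g) = density (PiM I (\<lambda>_. M)) (\<lambda>z. \<Prod>i\<in>I. g (z i))"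
proof -
  interpret D: product_sigma_finite "\<lambda>_. density M g" using sfd by (simp add: product_sigma_finite_def)
  interpret P: product_sigma_finite "\<lambda>_. M" using sf by (simp add: product_sigma_finite_def)
  show ?thesis
  proof (rule D.PiM_eqI[symmetric, OF I])
    show "sets (density (PiM I (\<lambda>_. M)) (\<lambda>z. \<Prod>i\<in>I. g (z i))) = sets (PiM I (\<lambda>_. density M g))"
      by (simp cong: sets_PiM_cong)
    fix A assume A: "\<And>i. i \<in> I \<Longrightarrow> A i \<in> sets (density M g)"
    then have A': "\<And>i. i \<in> I \<Longrightarrow> A i \<in> sets M" by simp
    have "emeasure (density (PiM I (\<lambda>_. M)) (\<lambda>z. \<Prod>i\<in>I. g (z i))) (Pi\<^sub>E I A)
       = (\<integral>\<^sup>+z. (\<Prod>i\<in>I. g (z i)) * indicator (Pi\<^sub>E I A) z \<partial>PiM I (\<lambda>_. M))"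
      using A' g by (intro emeasure_density) (auto intro!: sets_PiM_I_finite I)
    also have "\<dots> = (\<integral>\<^sup>+z. (\<Prod>i\<in>I. g (z i) * indicator (A i) (z i)) \<partial>PiM I (\<lambda>_. M))"
      by (intro nn_integral_cong) (simp add: prod.distrib prod_indicator_PiE space_PiM PiE_iff I)
    also have "\<dots> = (\<Prod>i\<in>I. \<integral>\<^sup>+x. g x * indicator (A i) x \<partial>M)"
      using A' g by (intro P.product_nn_integral_prod I) auto
    also have "\<dots> = (\<Prod>i\<in>I. emeasure (density M g) (A i))"
      using A' g by (intro prod.cong refl) (simp add: emeasure_density)
    finally show "emeasure (density (PiM I (\<lambda>_. M)) (\<lambda>z. \<Prod>i\<in>I. g (z i))) (Pi\<^sub>E I A)
       = (\<Prod>i\<in>I. emeasure (density M g) (A i))" .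
  qed
qed

definition prd :: "nat \<Rightarrow> nat \<Rightarrow> nat" where "prd k i = (i + k - 1) mod k"

lemma prd_lt: "1 \<le> k \<Longrightarrow> prd k i < k" by (simp add: prd_def)

lemma Suc_prd: "1 \<le> k \<Longrightarrow> i < k \<Longrightarrow> Suc (prd k i) mod k = i"
  unfolding prd_def
proof (cases i)
  case 0
  assume "1 \<le> k" "i < k" then show "Suc ((i + k - 1) mod k) mod k = i"
    using 0 by (cases k) auto
next
  case (Suc j)
  assume "1 \<le> k" "i < k" then show "Suc ((i + k - 1) mod k) mod k = i"
    using Suc by (simp add: mod_if)
qed

lemma prd_Suc: "1 \<le> k \<Longrightarrow> i < k \<Longrightarrow> prd k (Suc i mod k) = i"
  unfolding prd_def
  by (cases "Suc i = k") (auto simp: mod_if)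

definition rectG :: "nat set \<Rightarrow> 'a measure \<Rightarrow> 'b measure \<Rightarrow> (nat \<Rightarrow> 'a \<times> 'b) set set" where
  "rectG I N1 N2 = {Pi\<^sub>E I (\<lambda>i. U i \<times> V i) | U V. \<forall>i\<in>I. U i \<in> sets N1 \<and> V i \<in> sets N2}"

lemma sets_PiM_rect:
  assumes I: "finite I"
  shows "sets (PiM I (\<lambda>_. N1 \<Otimes>\<^sub>M N2)) = sigma_sets (Pi\<^sub>E I (\<lambda>_. space N1 \<times> space N2)) (rectG I N1 N2)"
proof -
  define \<Omega> where "\<Omega> = space N1 \<times> space N2"
  define E where "E = {a \<times> b | a b. a \<in> sets N1 \<and> b \<in> sets N2}"
  have EP: "E \<subseteq> Pow \<Omega>"
  proof
    fix X assume "X \<in> E"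
    then obtain a b where "X = a \<times> b" "a \<in> sets N1" "b \<in> sets N2" unfolding E_def by blast
    then show "X \<in> Pow \<Omega>" using sets.sets_into_space[of a N1] sets.sets_into_space[of b N2]
      unfolding \<Omega>_def by auto
  qed
  have sE: "sets (sigma \<Omega> E) = sets (N1 \<Otimes>\<^sub>M N2)"
  proof -
    have "sets (N1 \<Otimes>\<^sub>M N2) = sigma_sets \<Omega> E" unfolding E_def \<Omega>_def by (rule sets_pair_measure)
    then show ?thesis using sets_measure_of[OF EP] by simp
  qed
  define P where "P = {{f\<in>(\<Pi>\<^sub>E i\<in>I. \<Omega>). \<forall>i\<in>j. f i \<in> A i} | A j. j \<in> {I} \<and> A \<in> Pi j (\<lambda>_. E)}"
  have S1: "sets (\<Pi>\<^sub>M i\<in>I. sigma \<Omega> E) = sets (sigma (\<Pi>\<^sub>E i\<in>I. \<Omega>) P)"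
    unfolding P_def
  proof (rule sets_PiM_sigma)
    show "\<exists>S\<subseteq>E. countable S \<and> \<Omega> = \<Union> S" for i
    proof -
      have "\<Omega> \<in> E" using sets.top[of N1] sets.top[of N2] unfolding E_def \<Omega>_def by blast
      then show ?thesis by (intro exI[of _ "{\<Omega>}"]) simp
    qed
  next
    show "\<And>i. i \<in> I \<Longrightarrow> E \<subseteq> Pow \<Omega>" using EP by blast
  next
    show "\<And>j. j \<in> {I} \<Longrightarrow> finite j" using I by simp
  next
    show "\<Union>{I} = I" by simp
  qed
  have PP: "P \<subseteq> Pow (\<Pi>\<^sub>E i\<in>I. \<Omega>)" unfolding P_def by blast
  have Peq: "P = rectG I N1 N2"
  proof
    show "P \<subseteq> rectG I N1 N2"
    proof
      fix X assume "X \<in> P"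
      then obtain A where A: "A \<in> Pi I (\<lambda>_. E)" and X: "X = {f\<in>(\<Pi>\<^sub>E i\<in>I. \<Omega>). \<forall>i\<in>I. f i \<in> A i}"
        unfolding P_def by blast
      have "\<forall>i\<in>I. \<exists>a. \<exists>b. A i = a \<times> b \<and> a \<in> sets N1 \<and> b \<in> sets N2" using A unfolding E_def by blast
      then obtain U V where UV: "\<forall>i\<in>I. A i = U i \<times> V i \<and> U i \<in> sets N1 \<and> V i \<in> sets N2"
        by metis
      have sub: "\<forall>i\<in>I. U i \<times> V i \<subseteq> \<Omega>"
        using UV sets.sets_into_space unfolding \<Omega>_def by (metis Sigma_mono)
      have Xeq: "X = Pi\<^sub>E I (\<lambda>i. U i \<times> V i)"
        unfolding X using sub UV by (auto simp: PiE_iff extensional_def) blast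
      show "X \<in> rectG I N1 N2" unfolding rectG_def mem_Collect_eq
        by (rule exI[of _ U], rule exI[of _ V]) (use UV Xeq in blast)
    qed
    show "rectG I N1 N2 \<subseteq> P"
    proof
      fix X assume "X \<in> rectG I N1 N2"
      then obtain U V where UV: "\<forall>i\<in>I. U i \<in> sets N1 \<and> V i \<in> sets N2" and X: "X = Pi\<^sub>E I (\<lambda>i. U i \<times> V i)"
        unfolding rectG_def by blast
      have sub: "\<forall>i\<in>I. U i \<times> V i \<subseteq> \<Omega>"
        using UV sets.sets_into_space unfolding \<Omega>_def by (metis Sigma_mono)
      have "X = {f\<in>(\<Pi>\<^sub>E i\<in>I. \<Omega>). \<forall>i\<in>I. f i \<in> U i \<times> V i}"
        unfolding X using sub by (auto simp: PiE_iff extensional_def)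
      moreover have "(\<lambda>i. U i \<times> V i) \<in> Pi I (\<lambda>_. E)" using UV unfolding E_def by blast
      ultimately show "X \<in> P" unfolding P_def mem_Collect_eq
        by (intro exI[of _ "\<lambda>i. U i \<times> V i"] exI[of _ I]) simp
    qed
  qed
  have "sets (PiM I (\<lambda>_. N1 \<Otimes>\<^sub>M N2)) = sets (PiM I (\<lambda>i. sigma \<Omega> E))"
    by (rule sets_PiM_cong) (simp_all add: sE)
  also have "\<dots> = sigma_sets (\<Pi>\<^sub>E i\<in>I. \<Omega>) P"
    unfolding S1 by (rule sets_measure_of[OF PP])
  finally show ?thesis unfolding Peq \<Omega>_def .
qed
definition gsh :: "(nat \<Rightarrow> nat) \<Rightarrow> nat \<Rightarrow> (nat \<Rightarrow> 'a \<times> 'b) \<Rightarrow> (nat \<Rightarrow> 'a \<times> 'b)" where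
  "gsh h k z = (\<lambda>i\<in>{..<k}. (fst (z i), snd (z (h i))))"

lemma shift_y_gsh: "shift_y k = gsh (\<lambda>i. Suc i mod k) k"
  by (simp add: fun_eq_iff shift_y_def gsh_def)

lemma measurable_gsh:
  assumes h: "\<And>i. i < k \<Longrightarrow> h i < k" and M: "sets M = sets (N1 \<Otimes>\<^sub>M N2)"
  shows "gsh h k \<in> measurable (PiM {..<k} (\<lambda>_. M)) (PiM {..<k} (\<lambda>_. M :: ('a \<times> 'b) measure))"
  unfolding gsh_def
proof (rule measurable_restrict)
  fix i assume i: "i \<in> {..<k}"
  then have j: "h i \<in> {..<k}" using h by auto
  have a: "(\<lambda>x. x i) \<in> measurable (PiM {..<k} (\<lambda>_. M)) (N1 \<Otimes>\<^sub>M N2)"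
    by (subst measurable_cong_sets[OF refl M[symmetric]]) (rule measurable_component_singleton[OF i])
  have b: "(\<lambda>x. x (h i)) \<in> measurable (PiM {..<k} (\<lambda>_. M)) (N1 \<Otimes>\<^sub>M N2)"
    by (subst measurable_cong_sets[OF refl M[symmetric]]) (rule measurable_component_singleton[OF j])
  have "(\<lambda>x. (fst (x i), snd (x (h i)))) \<in> measurable (PiM {..<k} (\<lambda>_. M)) (N1 \<Otimes>\<^sub>M N2)"
    by (rule measurable_Pair) (rule measurable_compose[OF a measurable_fst], rule measurable_compose[OF b measurable_snd])
  then show "(\<lambda>x. (fst (x i), snd (x (h i)))) \<in> measurable (PiM {..<k} (\<lambda>_. M)) M"
    by (subst measurable_cong_sets[OF refl M])
qed

lemma gsh_preimage:
  assumes h: "\<And>i. i < k \<Longrightarrow> h i < k" and g: "\<And>i. i < k \<Longrightarrow> g i < k"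
    and hg: "\<And>i. i < k \<Longrightarrow> h (g i) = i" and gh: "\<And>i. i < k \<Longrightarrow> g (h i) = i"
    and U: "\<And>i. i < k \<Longrightarrow> U i \<subseteq> S1" and V: "\<And>i. i < k \<Longrightarrow> V i \<subseteq> S2"
  shows "gsh h k -` Pi\<^sub>E {..<k} (\<lambda>i. U i \<times> V i) \<inter> Pi\<^sub>E {..<k} (\<lambda>_. S1 \<times> S2)
       = Pi\<^sub>E {..<k} (\<lambda>j. U j \<times> V (g j))"
proof (rule set_eqI)
  fix z
  show "z \<in> gsh h k -` Pi\<^sub>E {..<k} (\<lambda>i. U i \<times> V i) \<inter> Pi\<^sub>E {..<k} (\<lambda>_. S1 \<times> S2)
       \<longleftrightarrow> z \<in> Pi\<^sub>E {..<k} (\<lambda>j. U j \<times> V (g j))"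
  proof
    assume z: "z \<in> gsh h k -` Pi\<^sub>E {..<k} (\<lambda>i. U i \<times> V i) \<inter> Pi\<^sub>E {..<k} (\<lambda>_. S1 \<times> S2)"
    then have z1: "\<forall>i<k. fst (z i) \<in> U i \<and> snd (z (h i)) \<in> V i" and z2: "z \<in> extensional {..<k}"
      unfolding gsh_def by (auto simp: restrict_PiE_iff PiE_iff mem_Times_iff)
    have "\<forall>j<k. fst (z j) \<in> U j \<and> snd (z j) \<in> V (g j)"
    proof (intro allI impI conjI)
      fix j assume j: "j < k"
      show "fst (z j) \<in> U j" using z1 j by blast
      show "snd (z j) \<in> V (g j)" using z1 g[OF j] hg[OF j] by metis
    qed
    then show "z \<in> Pi\<^sub>E {..<k} (\<lambda>j. U j \<times> V (g j))" using z2 by (auto simp: PiE_iff mem_Times_iff)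
  next
    assume z: "z \<in> Pi\<^sub>E {..<k} (\<lambda>j. U j \<times> V (g j))"
    then have z1: "\<forall>j<k. fst (z j) \<in> U j \<and> snd (z j) \<in> V (g j)" and z2: "z \<in> extensional {..<k}"
      by (auto simp: PiE_iff mem_Times_iff)
    have "\<forall>i<k. fst (z i) \<in> U i \<and> snd (z (h i)) \<in> V i"
    proof (intro allI impI conjI)
      fix i assume i: "i < k"
      show "fst (z i) \<in> U i" using z1 i by blast
      show "snd (z (h i)) \<in> V i" using z1 h[OF i] gh[OF i] by metis
    qed
    moreover have "\<forall>j<k. z j \<in> S1 \<times> S2"
      using z1 U V g by (metis mem_Times_iff subsetD)
    ultimately show "z \<in> gsh h k -` Pi\<^sub>E {..<k} (\<lambda>i. U i \<times> V i) \<inter> Pi\<^sub>E {..<k} (\<lambda>_. S1 \<times> S2)"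
      using z2 unfolding gsh_def by (auto simp: restrict_PiE_iff PiE_iff mem_Times_iff)
  qed
qed


lemma gsh_preserving:
  fixes N1 :: "'a measure" and N2 :: "'b measure"
  assumes N1: "prob_space N1" and N2: "prob_space N2"
    and h: "\<And>i. i < k \<Longrightarrow> h i < k" and g: "\<And>i. i < k \<Longrightarrow> g i < k"
    and hg: "\<And>i. i < k \<Longrightarrow> h (g i) = i" and gh: "\<And>i. i < k \<Longrightarrow> g (h i) = i"
  shows "distr (PiM {..<k} (\<lambda>_. N1 \<Otimes>\<^sub>M N2)) (PiM {..<k} (\<lambda>_. N1 \<Otimes>\<^sub>M N2)) (gsh h k)
         = PiM {..<k} (\<lambda>_. N1 \<Otimes>\<^sub>M N2)"
proof -
  let ?P = "N1 \<Otimes>\<^sub>M N2"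
  let ?Pk = "PiM {..<k} (\<lambda>_. ?P)"
  let ?\<Omega> = "Pi\<^sub>E {..<k} (\<lambda>_. space N1 \<times> space N2)"
  let ?G = "rectG {..<k} N1 N2"
  have P: "prob_space ?P" by (rule prob_space_pair[OF N1 N2])
  interpret Pk: prob_space ?Pk by (rule prob_space_PiM) (use P in auto)
  interpret PS: product_sigma_finite "\<lambda>_. ?P"
    using P by (simp add: product_sigma_finite_def prob_space_imp_sigma_finite)
  interpret N2s: sigma_finite_measure N2 using N2 by (rule prob_space_imp_sigma_finite)
  have meas: "gsh h k \<in> measurable ?Pk ?Pk" by (rule measurable_gsh) (use h in auto)
  have sets: "sets ?Pk = sigma_sets ?\<Omega> ?G" by (rule sets_PiM_rect) simp
  have sp: "space ?Pk = ?\<Omega>" by (simp add: space_PiM space_pair_measure)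
  have Gsets: "?G \<subseteq> sets ?Pk" unfolding sets by auto
  have bijg: "bij_betw g {..<k} {..<k}"
    by (rule bij_betw_byWitness[where f'=h]) (use h g hg gh in auto)
  show ?thesis
  proof (rule measure_eqI_generator_eq[where E="?G" and \<Omega>="?\<Omega>" and A="\<lambda>_. ?\<Omega>"])
    show "Int_stable ?G"
    proof (rule Int_stableI)
      fix a b assume "a \<in> ?G" "b \<in> ?G"
      obtain U V where UV: "\<forall>i\<in>{..<k}. U i \<in> sets N1 \<and> V i \<in> sets N2" "a = Pi\<^sub>E {..<k} (\<lambda>i. U i \<times> V i)"
        using \<open>a \<in> ?G\<close> unfolding rectG_def by blast
      obtain U' V' where UV': "\<forall>i\<in>{..<k}. U' i \<in> sets N1 \<and> V' i \<in> sets N2" "b = Pi\<^sub>E {..<k} (\<lambda>i. U' i \<times> V' i)"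
        using \<open>b \<in> ?G\<close> unfolding rectG_def by blast
      have "a \<inter> b = Pi\<^sub>E {..<k} (\<lambda>i. (U i \<inter> U' i) \<times> (V i \<inter> V' i))"
        unfolding UV(2) UV'(2) PiE_Int Times_Int_Times ..
      moreover have "\<forall>i\<in>{..<k}. U i \<inter> U' i \<in> sets N1 \<and> V i \<inter> V' i \<in> sets N2" using UV UV' by auto
      ultimately show "a \<inter> b \<in> ?G" unfolding rectG_def mem_Collect_eq
        by (intro exI[of _ "\<lambda>i. U i \<inter> U' i"] exI[of _ "\<lambda>i. V i \<inter> V' i"]) simp
    qed
    show "?G \<subseteq> Pow ?\<Omega>"
    proof
      fix x assume "x \<in> ?G"
      then have "x \<in> sets ?Pk" using Gsets by blast
      then show "x \<in> Pow ?\<Omega>" using sets.sets_into_space[of x ?Pk] sp by simp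
    qed
    show "sets (distr ?Pk ?Pk (gsh h k)) = sigma_sets ?\<Omega> ?G" using sets by simp
    show "sets ?Pk = sigma_sets ?\<Omega> ?G" by (rule sets)
    have "?\<Omega> \<in> ?G" unfolding rectG_def mem_Collect_eq
      by (intro exI[of _ "\<lambda>_. space N1"] exI[of _ "\<lambda>_. space N2"]) simp
    then show "range (\<lambda>_. ?\<Omega>) \<subseteq> ?G" by auto
    show "(\<Union>i::nat. ?\<Omega>) = ?\<Omega>" by simp
    interpret D: prob_space "distr ?Pk ?Pk (gsh h k)" by (rule Pk.prob_space_distr[OF meas])
    show "emeasure (distr ?Pk ?Pk (gsh h k)) ?\<Omega> \<noteq> \<infinity>" using D.emeasure_finite[of ?\<Omega>] by simp
    fix X assume "X \<in> ?G"
    then obtain U V where UV: "\<forall>i\<in>{..<k}. U i \<in> sets N1 \<and> V i \<in> sets N2" and X: "X = Pi\<^sub>E {..<k} (\<lambda>i. U i \<times> V i)"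
      unfolding rectG_def by blast
    have XS: "X \<in> sets ?Pk" using \<open>X \<in> ?G\<close> Gsets by blast
    have "emeasure (distr ?Pk ?Pk (gsh h k)) X = emeasure ?Pk (gsh h k -` X \<inter> space ?Pk)"
      by (rule emeasure_distr[OF meas XS])
    also have "gsh h k -` X \<inter> space ?Pk = Pi\<^sub>E {..<k} (\<lambda>j. U j \<times> V (g j))"
      unfolding sp X by (rule gsh_preimage[OF h g hg gh]) (use UV sets.sets_into_space in auto)
    also have "emeasure ?Pk (Pi\<^sub>E {..<k} (\<lambda>j. U j \<times> V (g j))) = (\<Prod>j<k. emeasure ?P (U j \<times> V (g j)))"
      by (rule PS.emeasure_PiM) (use UV g in auto)
    also have "\<dots> = (\<Prod>j<k. emeasure N1 (U j) * emeasure N2 (V (g j)))"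
      by (rule prod.cong[OF refl]) (rule N2s.emeasure_pair_measure_Times, use UV g in auto)
    also have "\<dots> = (\<Prod>j<k. emeasure N1 (U j)) * (\<Prod>j<k. emeasure N2 (V (g j)))"
      by (rule prod.distrib)
    also have "(\<Prod>j<k. emeasure N2 (V (g j))) = (\<Prod>j<k. emeasure N2 (V j))"
      by (rule prod.reindex_bij_betw[OF bijg])
    also have "(\<Prod>j<k. emeasure N1 (U j)) * (\<Prod>j<k. emeasure N2 (V j)) = (\<Prod>j<k. emeasure N1 (U j) * emeasure N2 (V j))"
      by (rule prod.distrib[symmetric])
    also have "\<dots> = (\<Prod>j<k. emeasure ?P (U j \<times> V j))"
      by (rule prod.cong[OF refl]) (rule N2s.emeasure_pair_measure_Times[symmetric], use UV in auto)
    also have "\<dots> = emeasure ?Pk X"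
      unfolding X by (rule PS.emeasure_PiM[symmetric]) (use UV in auto)
    finally show "emeasure (distr ?Pk ?Pk (gsh h k)) X = emeasure ?Pk X" .
  qed
qed

lemma shift_y_apply: "i < k \<Longrightarrow> shift_y k z i = (fst (z i), snd (z (Suc i mod k)))"
  by (simp add: shift_y_def)

lemma gsh_gsh:
  assumes "\<And>i. i < k \<Longrightarrow> h i < k" "\<And>i. i < k \<Longrightarrow> g (h i) = i" "z \<in> extensional {..<k}"
  shows "gsh h k (gsh g k z) = z"
proof (rule ext)
  fix i show "gsh h k (gsh g k z) i = z i"
    using assms by (cases "i < k") (auto simp: gsh_def extensional_def)
qed

lemma gsh_space: "z \<in> Pi\<^sub>E {..<k} (\<lambda>_. S1 \<times> S2) \<Longrightarrow> (\<And>i. i < k \<Longrightarrow> h i < k) \<Longrightarrow>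
   gsh h k z \<in> Pi\<^sub>E {..<k} (\<lambda>_. S1 \<times> S2)"
  unfolding gsh_def by (auto simp: restrict_PiE_iff PiE_iff mem_Times_iff)

lemma core:
  fixes \<mu> :: "'a measure" and \<nu> :: "'b measure" and f :: "'a \<times> 'b \<Rightarrow> real"
    and c :: "'a \<times> 'b \<Rightarrow> real" and A :: "(nat \<Rightarrow> 'a \<times> 'b) set"
  assumes \<mu>: "prob_space \<mu>" and \<nu>: "prob_space \<nu>"
    and fm: "f \<in> borel_measurable (\<mu> \<Otimes>\<^sub>M \<nu>)" and fpos: "\<And>z. f z > 0"
    and prob: "prob_space (density (\<mu> \<Otimes>\<^sub>M \<nu>) (\<lambda>z. ennreal (f z)))"
    and cyc: "\<And>x y. (\<Prod>i<k. f (x i, y i)) =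
               exp (- (1/\<epsilon>) * ((\<Sum>i<k. c (x i, y i)) - (\<Sum>i<k. c (x i, y (Suc i mod k)))))
               * (\<Prod>i<k. f (x i, y (Suc i mod k)))"
    and k: "1 \<le> k" and A: "A \<in> sets (PiM {..<k} (\<lambda>_. \<mu> \<Otimes>\<^sub>M \<nu>))"
  defines "\<Delta> \<equiv> \<lambda>z. (\<Sum>i<k. c (z i)) - (\<Sum>i<k. c (fst (z i), snd (z (Suc i mod k))))"
  defines "\<Pi>k \<equiv> PiM {..<k} (\<lambda>_. density (\<mu> \<Otimes>\<^sub>M \<nu>) (\<lambda>z. ennreal (f z)))"
  defines "Pk \<equiv> PiM {..<k} (\<lambda>_. \<mu> \<Otimes>\<^sub>M \<nu>)"
  defines "F \<equiv> \<lambda>w. \<Prod>i<k. ennreal (f (w i))"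
  shows "shift_y k ` A \<in> sets Pk"
    and "emeasure \<Pi>k A = (\<integral>\<^sup>+z. ennreal (exp (- (1/\<epsilon>) * \<Delta> z)) * (F (shift_y k z) * indicator A z) \<partial>Pk)"
    and "emeasure \<Pi>k (shift_y k ` A) = (\<integral>\<^sup>+z. F (shift_y k z) * indicator A z \<partial>Pk)"
    and "(\<lambda>z. F (shift_y k z) * indicator A z) \<in> borel_measurable Pk"
proof -
  let ?P = "\<mu> \<Otimes>\<^sub>M \<nu>"
  let ?I = "{..<k}"
  let ?\<Omega> = "Pi\<^sub>E ?I (\<lambda>_. space \<mu> \<times> space \<nu>)"
  let ?sh = "shift_y k" and ?inv = "gsh (prd k) k"
  have P: "prob_space ?P" by (rule prob_space_pair[OF \<mu> \<nu>])
  have sfP: "sigma_finite_measure ?P" using P by (rule prob_space_imp_sigma_finite)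
  have sfD: "sigma_finite_measure (density ?P (\<lambda>z. ennreal (f z)))" using prob by (rule prob_space_imp_sigma_finite)
  have \<Pi>k_eq: "\<Pi>k = density Pk F"
    unfolding \<Pi>k_def Pk_def F_def by (rule PiM_density[OF _ sfP sfD]) (use fm in auto)
  have sp: "space Pk = ?\<Omega>" unfolding Pk_def by (simp add: space_PiM space_pair_measure)
  have sh_gsh: "?sh = gsh (\<lambda>i. Suc i mod k) k" by (rule shift_y_gsh)
  have shm: "?sh \<in> measurable Pk Pk" unfolding sh_gsh Pk_def
    by (rule measurable_gsh) (use k in auto)
  have invm: "?inv \<in> measurable Pk Pk" unfolding Pk_def
    by (rule measurable_gsh) (use k prd_lt[OF k] in auto)
  have Fm: "F \<in> borel_measurable Pk" unfolding F_def Pk_def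
    using fm by measurable
  have Asp: "A \<subseteq> ?\<Omega>" using sets.sets_into_space[OF A] sp Pk_def by simp
  have inv_sh: "?inv (?sh z) = z" if "z \<in> ?\<Omega>" for z
    unfolding sh_gsh by (rule gsh_gsh) (use that k prd_lt[OF k] Suc_prd[OF k] in \<open>auto simp: PiE_def\<close>)
  have sh_inv: "?sh (?inv z) = z" if "z \<in> ?\<Omega>" for z
    unfolding sh_gsh by (rule gsh_gsh) (use that k prd_Suc[OF k] in \<open>auto simp: PiE_def\<close>)
  have sh_sp: "?sh z \<in> ?\<Omega>" if "z \<in> ?\<Omega>" for z
    unfolding sh_gsh by (rule gsh_space[OF that]) (use k in auto)
  have inv_sp: "?inv z \<in> ?\<Omega>" if "z \<in> ?\<Omega>" for z
    by (rule gsh_space[OF that]) (use k prd_lt[OF k] in auto)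
  have SA: "?sh ` A = ?inv -` A \<inter> space Pk"
  proof
    show "?sh ` A \<subseteq> ?inv -` A \<inter> space Pk"
    proof
      fix w assume "w \<in> ?sh ` A"
      then obtain a where a: "a \<in> A" "w = ?sh a" by blast
      then have "a \<in> ?\<Omega>" using Asp by blast
      then have "?inv w = a" "w \<in> ?\<Omega>" using inv_sh sh_sp a by auto
      then show "w \<in> ?inv -` A \<inter> space Pk" using a sp by simp
    qed
    show "?inv -` A \<inter> space Pk \<subseteq> ?sh ` A"
    proof
      fix w assume w: "w \<in> ?inv -` A \<inter> space Pk"
      then have "w = ?sh (?inv w)" using sh_inv sp by auto
      then show "w \<in> ?sh ` A" using w by blast
    qed
  qed
  show SAs: "?sh ` A \<in> sets Pk"
    unfolding SA by (rule measurable_sets[OF invm]) (simp add: A Pk_def)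
  have ind: "indicator (?sh ` A) (?sh z) = (indicator A z :: ennreal)" if "z \<in> space Pk" for z
  proof -
    have "?sh z \<in> ?sh ` A \<longleftrightarrow> z \<in> A"
    proof
      assume "?sh z \<in> ?sh ` A"
      then obtain a where "a \<in> A" "?sh z = ?sh a" by blast
      then have "?inv (?sh z) = ?inv (?sh a)" by simp
      then show "z \<in> A" using inv_sh[of z] inv_sh[of a] \<open>a \<in> A\<close> Asp that sp by auto
    qed auto
    then show ?thesis by (simp add: indicator_def)
  qed
  have Fid: "F z = ennreal (exp (- (1/\<epsilon>) * \<Delta> z)) * F (?sh z)" for z
  proof -
    have "F z = ennreal (\<Prod>i<k. f (z i))"
      unfolding F_def by (rule prod_ennreal) (use fpos less_imp_le in blast)
    also have "(\<Prod>i<k. f (z i)) = (\<Prod>i<k. f (fst (z i), snd (z i)))" by simp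
    also have "\<dots> = exp (- (1/\<epsilon>) * \<Delta> z) * (\<Prod>i<k. f (fst (z i), snd (z (Suc i mod k))))"
      unfolding cyc[of "\<lambda>i. fst (z i)" "\<lambda>i. snd (z i)"] \<Delta>_def by simp
    also have "ennreal \<dots> = ennreal (exp (- (1/\<epsilon>) * \<Delta> z)) * ennreal (\<Prod>i<k. f (fst (z i), snd (z (Suc i mod k))))"
      by (rule ennreal_mult') simp
    also have "ennreal (\<Prod>i<k. f (fst (z i), snd (z (Suc i mod k)))) = F (?sh z)"
      unfolding F_def by (subst prod_ennreal) (auto intro!: prod.cong less_imp_le fpos simp: shift_y_apply)
    finally show ?thesis .
  qed
  show Hm: "(\<lambda>z. F (?sh z) * indicator A z) \<in> borel_measurable Pk"
  proof -
    have m1: "(\<lambda>z. F (?sh z)) \<in> borel_measurable Pk" by (rule measurable_compose[OF shm Fm])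
    have m2: "(\<lambda>z. indicator A z :: ennreal) \<in> borel_measurable Pk" using A unfolding Pk_def by simp
    show ?thesis by (rule borel_measurable_times_ennreal[OF m1 m2])
  qed
  have "emeasure \<Pi>k A = (\<integral>\<^sup>+z. F z * indicator A z \<partial>Pk)"
    unfolding \<Pi>k_eq by (rule emeasure_density) (use Fm A Pk_def in auto)
  also have "\<dots> = (\<integral>\<^sup>+z. ennreal (exp (- (1/\<epsilon>) * \<Delta> z)) * (F (?sh z) * indicator A z) \<partial>Pk)"
    by (rule nn_integral_cong) (subst Fid, simp only: mult.assoc)
  finally show "emeasure \<Pi>k A = (\<integral>\<^sup>+z. ennreal (exp (- (1/\<epsilon>) * \<Delta> z)) * (F (?sh z) * indicator A z) \<partial>Pk)" .
  have distr_eq: "distr Pk Pk ?sh = Pk"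
    unfolding sh_gsh Pk_def by (rule gsh_preserving[OF \<mu> \<nu>, where g="prd k"]) (use k prd_lt[OF k] Suc_prd[OF k] prd_Suc[OF k] in auto)
  have "emeasure \<Pi>k (?sh ` A) = (\<integral>\<^sup>+w. F w * indicator (?sh ` A) w \<partial>Pk)"
    unfolding \<Pi>k_eq by (rule emeasure_density) (use Fm SAs in auto)
  also have "\<dots> = (\<integral>\<^sup>+w. F w * indicator (?sh ` A) w \<partial>distr Pk Pk ?sh)"
    by (simp add: distr_eq)
  also have "\<dots> = (\<integral>\<^sup>+z. F (?sh z) * indicator (?sh ` A) (?sh z) \<partial>Pk)"
    by (rule nn_integral_distr[OF shm]) (use Fm SAs in auto)
  also have "\<dots> = (\<integral>\<^sup>+z. F (?sh z) * indicator A z \<partial>Pk)"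
    by (rule nn_integral_cong) (simp add: ind)
  finally show "emeasure \<Pi>k (?sh ` A) = (\<integral>\<^sup>+z. F (?sh z) * indicator A z \<partial>Pk)" .
qed

lemma pointwise_step:
  fixes a b \<epsilon> d :: real and y :: ereal
  assumes e: "\<epsilon> > 0" and ab: "exp (-d/\<epsilon>) * b \<le> a" and b: "0 \<le> b"
    and y: "y + ereal d < ereal \<epsilon> * elog b"
  shows "y < ereal \<epsilon> * elog a"
proof -
  have bpos: "b > 0"
  proof (rule ccontr)
    assume "\<not> b > 0"
    then have "elog b = -\<infinity>" by (simp add: elog_def)
    then have h: "ereal \<epsilon> * elog b = -\<infinity>" using e by simp
    have "y + ereal d < -\<infinity>" using y unfolding h .
    then show False by simp
  qed
  have apos: "a > 0" using ab bpos by (smt (verit) exp_gt_zero mult_pos_pos)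
  have "ln (exp (-d/\<epsilon>) * b) \<le> ln a" using ab bpos apos by (subst ln_le_cancel_iff) auto
  then have la: "-d/\<epsilon> + ln b \<le> ln a" using bpos by (simp add: ln_mult)
  have yb: "y + ereal d < ereal (\<epsilon> * ln b)" using y bpos by (simp add: elog_def)
  have "\<epsilon> * ln b - d \<le> \<epsilon> * ln a"
  proof -
    have "\<epsilon> * (-d/\<epsilon> + ln b) \<le> \<epsilon> * ln a" using la e by (intro mult_left_mono) auto
    then show ?thesis using e by (simp add: algebra_simps)
  qed
  moreover have "y < ereal (\<epsilon> * ln b - d)"
    using yb by (cases y) auto
  ultimately have "y < ereal (\<epsilon> * ln a)" by (meson ereal_less_eq(3) less_le_trans)
  then show ?thesis using apos by (simp add: elog_def)
qed

lemma liminf_part: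
  fixes a b :: "real \<Rightarrow> real" and d :: real
  assumes ab: "\<And>\<epsilon>. \<epsilon> > 0 \<Longrightarrow> exp (-d/\<epsilon>) * b \<epsilon> \<le> a \<epsilon>" and b: "\<And>\<epsilon>. 0 \<le> b \<epsilon>"
    and L: "Liminf (at_right 0) (\<lambda>\<epsilon>. ereal \<epsilon> * elog (b \<epsilon>)) = 0"
  shows "- ereal d \<le> Liminf (at_right 0) (\<lambda>\<epsilon>. ereal \<epsilon> * elog (a \<epsilon>))"
  unfolding le_Liminf_iff
proof (intro allI impI)
  fix y assume y: "y < - ereal d"
  have "y + ereal d < 0" using y by (cases y) auto
  then have ev: "eventually (\<lambda>\<epsilon>. y + ereal d < ereal \<epsilon> * elog (b \<epsilon>)) (at_right 0)"
    using L le_Liminf_iff[of 0 "at_right (0::real)" "\<lambda>\<epsilon>. ereal \<epsilon> * elog (b \<epsilon>)"] by simp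
  show "eventually (\<lambda>\<epsilon>. y < ereal \<epsilon> * elog (a \<epsilon>)) (at_right 0)"
    using ev eventually_at_right_less[of "0::real"]
    by eventually_elim (rule pointwise_step[OF _ ab b], auto)
qed


lemma core_bounds:
  fixes \<mu> :: "'a measure" and \<nu> :: "'b measure" and f :: "'a \<times> 'b \<Rightarrow> real"
    and c :: "'a \<times> 'b \<Rightarrow> real" and A :: "(nat \<Rightarrow> 'a \<times> 'b) set"
  assumes \<mu>: "prob_space \<mu>" and \<nu>: "prob_space \<nu>"
    and fm: "f \<in> borel_measurable (\<mu> \<Otimes>\<^sub>M \<nu>)" and fpos: "\<And>z. f z > 0"
    and prob: "prob_space (density (\<mu> \<Otimes>\<^sub>M \<nu>) (\<lambda>z. ennreal (f z)))"
    and cyc: "\<And>x y. (\<Prod>i<k. f (x i, y i)) =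
               exp (- (1/\<epsilon>) * ((\<Sum>i<k. c (x i, y i)) - (\<Sum>i<k. c (x i, y (Suc i mod k)))))
               * (\<Prod>i<k. f (x i, y (Suc i mod k)))"
    and k: "1 \<le> k" and A: "A \<in> sets (PiM {..<k} (\<lambda>_. \<mu> \<Otimes>\<^sub>M \<nu>))" and e: "\<epsilon> > 0"
  defines "\<Delta> \<equiv> \<lambda>z. (\<Sum>i<k. c (z i)) - (\<Sum>i<k. c (fst (z i), snd (z (Suc i mod k))))"
  defines "\<Pi>k \<equiv> PiM {..<k} (\<lambda>_. density (\<mu> \<Otimes>\<^sub>M \<nu>) (\<lambda>z. ennreal (f z)))"
  shows "(\<forall>z\<in>A. t \<le> \<Delta> z) \<Longrightarrow> emeasure \<Pi>k A \<le> ennreal (exp (-t/\<epsilon>)) * emeasure \<Pi>k (shift_y k ` A)"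
    and "(\<forall>z\<in>A. \<Delta> z \<le> t) \<Longrightarrow> ennreal (exp (-t/\<epsilon>)) * emeasure \<Pi>k (shift_y k ` A) \<le> emeasure \<Pi>k A"
proof -
  define Pk where "Pk = PiM {..<k} (\<lambda>_. \<mu> \<Otimes>\<^sub>M \<nu>)"
  define F where "F = (\<lambda>w. \<Prod>i<k. ennreal (f (w i)))"
  define H where "H = (\<lambda>z. F (shift_y k z) * indicator A z :: ennreal)"
  have C2: "emeasure \<Pi>k A = (\<integral>\<^sup>+z. ennreal (exp (- (1/\<epsilon>) * \<Delta> z)) * H z \<partial>Pk)"
    unfolding \<Pi>k_def Pk_def F_def \<Delta>_def H_def by (rule core(2)[OF \<mu> \<nu> fm fpos prob cyc k A])
  have C3: "emeasure \<Pi>k (shift_y k ` A) = (\<integral>\<^sup>+z. H z \<partial>Pk)"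
    unfolding \<Pi>k_def Pk_def F_def H_def by (rule core(3)[OF \<mu> \<nu> fm fpos prob cyc k A])
  have Hm: "H \<in> borel_measurable Pk"
    unfolding Pk_def F_def H_def by (rule core(4)[OF \<mu> \<nu> fm fpos prob cyc k A])
  have H0: "H z = 0" if "z \<notin> A" for z using that by (simp add: H_def)
  {
    assume t: "\<forall>z\<in>A. t \<le> \<Delta> z"
    have "emeasure \<Pi>k A \<le> (\<integral>\<^sup>+z. ennreal (exp (-t/\<epsilon>)) * H z \<partial>Pk)"
      unfolding C2
    proof (rule nn_integral_mono)
      fix z
      show "ennreal (exp (- (1/\<epsilon>) * \<Delta> z)) * H z \<le> ennreal (exp (-t/\<epsilon>)) * H z"
      proof (cases "z \<in> A")
        case True
        then have "t \<le> \<Delta> z" using t by blast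
        then have "- (1/\<epsilon>) * \<Delta> z \<le> -t/\<epsilon>" using e by (simp add: field_simps)
        then show ?thesis by (intro mult_right_mono ennreal_leI) auto
      qed (simp add: H0)
    qed
    also have "\<dots> = ennreal (exp (-t/\<epsilon>)) * emeasure \<Pi>k (shift_y k ` A)"
      unfolding C3 by (rule nn_integral_cmult[OF Hm])
    finally show "emeasure \<Pi>k A \<le> ennreal (exp (-t/\<epsilon>)) * emeasure \<Pi>k (shift_y k ` A)" .
  }
  {
    assume t: "\<forall>z\<in>A. \<Delta> z \<le> t"
    have "ennreal (exp (-t/\<epsilon>)) * emeasure \<Pi>k (shift_y k ` A) = (\<integral>\<^sup>+z. ennreal (exp (-t/\<epsilon>)) * H z \<partial>Pk)"
      unfolding C3 by (rule nn_integral_cmult[OF Hm, symmetric])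
    also have "\<dots> \<le> emeasure \<Pi>k A"
      unfolding C2
    proof (rule nn_integral_mono)
      fix z
      show "ennreal (exp (-t/\<epsilon>)) * H z \<le> ennreal (exp (- (1/\<epsilon>) * \<Delta> z)) * H z"
      proof (cases "z \<in> A")
        case True
        then have "\<Delta> z \<le> t" using t by blast
        then have "-t/\<epsilon> \<le> - (1/\<epsilon>) * \<Delta> z" using e by (simp add: field_simps)
        then show ?thesis by (intro mult_right_mono ennreal_leI) auto
      qed (simp add: H0)
    qed
    finally show "ennreal (exp (-t/\<epsilon>)) * emeasure \<Pi>k (shift_y k ` A) \<le> emeasure \<Pi>k A" .
  }
qed


theorem lemma3p1:
  fixes \<mu> :: "'a::polish_space measure" and \<nu> :: "'b::polish_space measure"
    and c :: "'a \<times> 'b \<Rightarrow> real" and \<pi> :: "real \<Rightarrow> ('a \<times> 'b) measure"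
    and k :: nat and \<delta> \<delta>' :: ereal and A :: "(nat \<Rightarrow> 'a \<times> 'b) set"
  assumes "prob_space \<mu>" "sets \<mu> = sets borel"
    and "prob_space \<nu>" "sets \<nu> = sets borel"
    and "c \<in> borel_measurable borel" "\<And>z. c z \<ge> 0"
    and "\<And>\<epsilon>. \<epsilon> > 0 \<Longrightarrow> cyc_inv_coupling \<mu> \<nu> c \<epsilon> (\<pi> \<epsilon>)"
    and "k \<ge> 2" "0 \<le> \<delta>" "\<delta> \<le> \<delta>'"
    and "A \<in> sets (PiM {..<k} (\<lambda>_. (borel :: ('a \<times> 'b) measure)))"
    and "A \<subseteq> A_set c k \<delta> \<delta>'"
  shows "(\<forall>\<epsilon>>0. measure (PiM {..<k} (\<lambda>_. \<pi> \<epsilon>)) A \<le> exp_neg_div \<delta> \<epsilon>)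
    \<and> (Liminf (at_right 0) (\<lambda>\<epsilon>. ereal \<epsilon> * elog (measure (PiM {..<k} (\<lambda>_. \<pi> \<epsilon>)) (shift_y k ` A))) = 0
       \<longrightarrow> Liminf (at_right 0) (\<lambda>\<epsilon>. ereal \<epsilon> * elog (measure (PiM {..<k} (\<lambda>_. \<pi> \<epsilon>)) A)) \<ge> - \<delta>')"
proof -
  let ?I = "{..<k}"
  have k1: "1 \<le> k" using assms(8) by simp
  have sP: "sets (\<mu> \<Otimes>\<^sub>M \<nu>) = sets (borel :: ('a \<times> 'b) measure)"
  proof -
    have "sets (\<mu> \<Otimes>\<^sub>M \<nu>) = sets (borel \<Otimes>\<^sub>M borel :: ('a \<times> 'b) measure)"
      by (rule sets_pair_measure_cong) (simp_all add: assms(2) assms(4))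
    also have "\<dots> = sets (borel :: ('a \<times> 'b) measure)" by (rule arg_cong[where f=sets, OF borel_prod])
    finally show ?thesis .
  qed
  have "sets (PiM ?I (\<lambda>_. \<mu> \<Otimes>\<^sub>M \<nu>)) = sets (PiM ?I (\<lambda>_. (borel :: ('a \<times> 'b) measure)))"
    by (rule sets_PiM_cong) (simp_all add: sP)
  then have AP: "A \<in> sets (PiM ?I (\<lambda>_. \<mu> \<Otimes>\<^sub>M \<nu>))" using assms(11) by simp
  define \<Delta> where "\<Delta> = (\<lambda>z. (\<Sum>i<k. c (z i)) - (\<Sum>i<k. c (fst (z i), snd (z (Suc i mod k)))))"
  define SA where "SA = shift_y k ` A"
  have Amem: "\<delta> \<le> ereal (\<Delta> z) \<and> ereal (\<Delta> z) \<le> \<delta>'" if "z \<in> A" for z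
    using that assms(12) unfolding A_set_def \<Delta>_def by blast
  have main: "(\<forall>t. (\<forall>z\<in>A. t \<le> \<Delta> z) \<longrightarrow>
        measure (PiM ?I (\<lambda>_. \<pi> \<epsilon>)) A \<le> exp (-t/\<epsilon>) * measure (PiM ?I (\<lambda>_. \<pi> \<epsilon>)) SA)
     \<and> (\<forall>t. (\<forall>z\<in>A. \<Delta> z \<le> t) \<longrightarrow>
        exp (-t/\<epsilon>) * measure (PiM ?I (\<lambda>_. \<pi> \<epsilon>)) SA \<le> measure (PiM ?I (\<lambda>_. \<pi> \<epsilon>)) A)
     \<and> measure (PiM ?I (\<lambda>_. \<pi> \<epsilon>)) SA \<le> 1" if e: "\<epsilon> > 0" for \<epsilon>
  proof -
    have ci: "cyc_inv_coupling \<mu> \<nu> c \<epsilon> (\<pi> \<epsilon>)" using assms(7) e .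
    then obtain f where fm: "f \<in> borel_measurable (\<mu> \<Otimes>\<^sub>M \<nu>)" and fpos: "\<And>z. f z > 0"
      and \<pi>eq: "\<pi> \<epsilon> = density (\<mu> \<Otimes>\<^sub>M \<nu>) (\<lambda>z. ennreal (f z))"
      and cycall: "\<forall>k::nat. k \<ge> 1 \<longrightarrow> (\<forall>(x::nat \<Rightarrow> 'a) (y::nat \<Rightarrow> 'b).
               (\<Prod>i<k. f (x i, y i)) =
               exp (- (1/\<epsilon>) * ((\<Sum>i<k. c (x i, y i)) - (\<Sum>i<k. c (x i, y (Suc i mod k)))))
               * (\<Prod>i<k. f (x i, y (Suc i mod k))))"
      unfolding cyc_inv_coupling_def by blast
    have coup: "coupling \<mu> \<nu> (\<pi> \<epsilon>)" using ci by (simp add: cyc_inv_coupling_def)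
    have prob\<pi>: "prob_space (\<pi> \<epsilon>)"
    proof (rule prob_space_distrD[of fst _ \<mu>])
      have spi: "sets (\<pi> \<epsilon>) = sets (\<mu> \<Otimes>\<^sub>M \<nu>)" using coup unfolding coupling_def by blast
      show "fst \<in> measurable (\<pi> \<epsilon>) \<mu>"
        unfolding measurable_cong_sets[OF spi refl] by (rule measurable_fst)
      show "prob_space (distr (\<pi> \<epsilon>) \<mu> fst)" using coup assms(1) unfolding coupling_def by simp
    qed
    then have prob: "prob_space (density (\<mu> \<Otimes>\<^sub>M \<nu>) (\<lambda>z. ennreal (f z)))" using \<pi>eq by simp
    have cyc: "\<And>x y. (\<Prod>i<k. f (x i, y i)) =
               exp (- (1/\<epsilon>) * ((\<Sum>i<k. c (x i, y i)) - (\<Sum>i<k. c (x i, y (Suc i mod k)))))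
               * (\<Prod>i<k. f (x i, y (Suc i mod k)))" using cycall k1 by blast
    interpret PK: prob_space "PiM ?I (\<lambda>_. \<pi> \<epsilon>)" by (rule prob_space_PiM) (use prob\<pi> in auto)
    note B = core_bounds[OF assms(1) assms(3) fm fpos prob cyc k1 AP e, folded \<pi>eq]
    have up: "measure (PiM ?I (\<lambda>_. \<pi> \<epsilon>)) A \<le> exp (-t/\<epsilon>) * measure (PiM ?I (\<lambda>_. \<pi> \<epsilon>)) SA"
      if t: "\<forall>z\<in>A. t \<le> \<Delta> z" for t
    proof -
      have "ennreal (measure (PiM ?I (\<lambda>_. \<pi> \<epsilon>)) A) \<le> ennreal (exp (-t/\<epsilon>)) * ennreal (measure (PiM ?I (\<lambda>_. \<pi> \<epsilon>)) SA)"
        using B(1)[of t] t unfolding \<Delta>_def SA_def by (simp add: PK.emeasure_eq_measure)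
      also have "\<dots> = ennreal (exp (-t/\<epsilon>) * measure (PiM ?I (\<lambda>_. \<pi> \<epsilon>)) SA)"
        by (rule ennreal_mult[symmetric]) auto
      finally show ?thesis by (subst (asm) ennreal_le_iff) auto
    qed
    have lo: "exp (-t/\<epsilon>) * measure (PiM ?I (\<lambda>_. \<pi> \<epsilon>)) SA \<le> measure (PiM ?I (\<lambda>_. \<pi> \<epsilon>)) A"
      if t: "\<forall>z\<in>A. \<Delta> z \<le> t" for t
    proof -
      have "ennreal (exp (-t/\<epsilon>) * measure (PiM ?I (\<lambda>_. \<pi> \<epsilon>)) SA) = ennreal (exp (-t/\<epsilon>)) * ennreal (measure (PiM ?I (\<lambda>_. \<pi> \<epsilon>)) SA)"
        by (rule ennreal_mult) auto
      also have "\<dots> \<le> ennreal (measure (PiM ?I (\<lambda>_. \<pi> \<epsilon>)) A)"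
        using B(2)[of t] t unfolding \<Delta>_def SA_def by (simp add: PK.emeasure_eq_measure)
      finally show ?thesis by (subst (asm) ennreal_le_iff) auto
    qed
    show ?thesis by (intro conjI allI impI, erule up, erule lo, rule PK.prob_le_1)
  qed
  show ?thesis
  proof (intro conjI allI impI)
    fix \<epsilon> :: real assume e: "\<epsilon> > 0"
    show "measure (PiM ?I (\<lambda>_. \<pi> \<epsilon>)) A \<le> exp_neg_div \<delta> \<epsilon>"
    proof (cases "\<delta> = \<infinity>")
      case True
      then have "A = {}" using Amem by fastforce
      then show ?thesis using True by (simp add: exp_neg_div_def)
    next
      case False
      define d where "d = real_of_ereal \<delta>"
      have dd: "\<delta> = ereal d" using False assms(9) unfolding d_def by (cases \<delta>) auto
      have Ad: "\<forall>z\<in>A. d \<le> \<Delta> z" using Amem dd by auto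
      have "measure (PiM ?I (\<lambda>_. \<pi> \<epsilon>)) A \<le> exp (-d/\<epsilon>) * measure (PiM ?I (\<lambda>_. \<pi> \<epsilon>)) SA"
        using mp[OF spec[OF conjunct1[OF main[OF e]]] Ad] .
      also have "\<dots> \<le> exp (-d/\<epsilon>) * 1"
        using conjunct2[OF conjunct2[OF main[OF e]]] by (intro mult_left_mono) auto
      finally show ?thesis using False by (simp add: exp_neg_div_def d_def)
    qed
  next
    assume L: "Liminf (at_right 0) (\<lambda>\<epsilon>. ereal \<epsilon> * elog (measure (PiM ?I (\<lambda>_. \<pi> \<epsilon>)) (shift_y k ` A))) = 0"
    show "- \<delta>' \<le> Liminf (at_right 0) (\<lambda>\<epsilon>. ereal \<epsilon> * elog (measure (PiM ?I (\<lambda>_. \<pi> \<epsilon>)) A))"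
    proof (cases "\<delta>' = \<infinity>")
      case True
      then show ?thesis by simp
    next
      case False
      define d' where "d' = real_of_ereal \<delta>'"
      have dd: "\<delta>' = ereal d'" using False assms(9,10) unfolding d'_def by (cases \<delta>') auto
      have Ad: "\<forall>z\<in>A. \<Delta> z \<le> d'" using Amem dd by auto
      have "- ereal d' \<le> Liminf (at_right 0) (\<lambda>\<epsilon>. ereal \<epsilon> * elog (measure (PiM ?I (\<lambda>_. \<pi> \<epsilon>)) A))"
      proof (rule liminf_part[where b="\<lambda>\<epsilon>. measure (PiM ?I (\<lambda>_. \<pi> \<epsilon>)) SA"])
        show "exp (-d'/\<epsilon>) * measure (PiM ?I (\<lambda>_. \<pi> \<epsilon>)) SA \<le> measure (PiM ?I (\<lambda>_. \<pi> \<epsilon>)) A"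
          if "\<epsilon> > 0" for \<epsilon> using mp[OF spec[OF conjunct1[OF conjunct2[OF main[OF that]]]] Ad] .
        show "0 \<le> measure (PiM ?I (\<lambda>_. \<pi> \<epsilon>)) SA" for \<epsilon> by simp
        show "Liminf (at_right 0) (\<lambda>\<epsilon>. ereal \<epsilon> * elog (measure (PiM ?I (\<lambda>_. \<pi> \<epsilon>)) SA)) = 0"
          using L unfolding SA_def .
      qed
      then show ?thesis using dd by simp
    qed
  qed
qed

end
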